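(* Assume $\lambda^*/n\to0$, $\lambda^*\to\infty$, that $\lambda_j/\lambda^*\to\lambda^0_j$ and $\sqrt{\lambda^*}/\lambda_j\to\psi_j$ for all $j$, and that $\lambda^0\in(0,1]^p$ and $\psi\in[0,\infty)^p$. Then for every $d>1$, $$\lim_{n\to\infty}\inf_{\beta\in\mathbb{R}^p}P_\beta\Big(\beta\in\hat\beta_{AL}-\sqrt{\tfrac{\lambda^*}{n}}\,\mathcal{M}_d\Big)=1,$$ where $\mathcal{M}_d=\mathcal{M}(d\lambda^0,\psi)$.
   Context: For each $n\ge p$: linear regression model $y=X\beta+\varepsilon$ with $y\in\mathbb{R}^n$, non-stochastic $X\in\mathbb{R}^{n\times p}$ ($p$ fixed) of full column rank, unknown $\beta\in\mathbb{R}^p$, and $\varepsilon$ with i.i.d. components of mean zero and finite variance $\sigma^2>0$; $P_\beta$ is the probability when the true parameter is $\beta$. $X'X/n\to C$ positive definite, and $\sqrt{n}(X'X)^{-1}X'\varepsilon\overset{d}{\longrightarrow}N(0,\sigma^2C^{-1})$. $\hat\beta_{LS}=(X'X)^{-1}X'y$; the events $\{\hat\beta_{LS,j}=0\}$ have probability zero and are excluded. Positive tuning parameters $\lambda_j=\lambda_{n,j}$, $\lambda^*=\max_j\lambda_j$. Adaptive Lasso: $\hat\beta_{AL}=\arg\min_{b\in\mathbb{R}^p}\big(\|y-Xb\|^2+2\sum_{j=1}^p\lambda_j|b_j|/|\hat\beta_{LS,j}|\big)$. For $\mu\in[0,\infty)^p$ and $\psi\in[0,\infty]^p$, $\mathcal{M}(\mu,\psi)=\{m\in\mathbb{R}^p:(Cm)_j=0\text{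 if }\psi_j=\infty,\ m_j(Cm)_j\le\mu_j\text{ if }\psi_j<\infty\}$. For a set $S$ and scalar $c$, $\hat\beta_{AL}-cS=\{\hat\beta_{AL}-cs:s\in S\}$. *)

theory Defs
  imports "HOL-Probability.Probability"
begin

text \<open>Design matrices: X n i j is entry (i,j) of the n x p matrix X_n (rows i < n),
  the column index j ranges over a finite type 'p with CARD('p) = p.\<close>

definition XtX :: "(nat \<Rightarrow> nat \<Rightarrow> 'p::finite \<Rightarrow> real) \<Rightarrow> nat \<Rightarrow> real^'p^'p" where
  "XtX X n = (\<chi> j k. \<Sum>i<n. X n i j * X n i k)"

definition Xt_mult :: "(nat \<Rightarrow> nat \<Rightarrow> 'p::finite \<Rightarrow> real) \<Rightarrow> nat \<Rightarrow> (nat \<Rightarrow> real) \<Rightarrow> real^'p" where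
  "Xt_mult X n y = (\<chi> j. \<Sum>i<n. X n i j * y i)"

definition X_mult :: "(nat \<Rightarrow> nat \<Rightarrow> 'p::finite \<Rightarrow> real) \<Rightarrow> nat \<Rightarrow> real^'p \<Rightarrow> nat \<Rightarrow> real" where
  "X_mult X n b i = (\<Sum>j\<in>UNIV. X n i j * b $ j)"

definition response :: "(nat \<Rightarrow> nat \<Rightarrow> 'p::finite \<Rightarrow> real) \<Rightarrow> nat \<Rightarrow> real^'p \<Rightarrow> (nat \<Rightarrow> real) \<Rightarrow> nat \<Rightarrow> real" where
  "response X n \<beta> eps i = X_mult X n \<beta> i + eps i"

definition beta_LS :: "(nat \<Rightarrow> nat \<Rightarrow> 'p::finite \<Rightarrow> real) \<Rightarrow> nat \<Rightarrow> (nat \<Rightarrow> real) \<Rightarrow> real^'p" where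
  "beta_LS X n y = matrix_inv (XtX X n) *v Xt_mult X n y"

definition AL_objective ::
  "(nat \<Rightarrow> nat \<Rightarrow> 'p::finite \<Rightarrow> real) \<Rightarrow> (nat \<Rightarrow> 'p \<Rightarrow> real) \<Rightarrow> nat \<Rightarrow> (nat \<Rightarrow> real) \<Rightarrow> real^'p \<Rightarrow> real" where
  "AL_objective X lam n y b =
     (\<Sum>i<n. (y i - X_mult X n b i)\<^sup>2)
     + 2 * (\<Sum>j\<in>UNIV. lam n j * \<bar>b $ j\<bar> / \<bar>beta_LS X n y $ j\<bar>)"

definition beta_AL ::
  "(nat \<Rightarrow> nat \<Rightarrow> 'p::finite \<Rightarrow> real) \<Rightarrow> (nat \<Rightarrow> 'p \<Rightarrow> real) \<Rightarrow> nat \<Rightarrow> (nat \<Rightarrow> real) \<Rightarrow> real^'p" where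
  "beta_AL X lam n y = (THE b. \<forall>b'. AL_objective X lam n y b \<le> AL_objective X lam n y b')"

definition lam_star :: "(nat \<Rightarrow> 'p::finite \<Rightarrow> real) \<Rightarrow> nat \<Rightarrow> real" where
  "lam_star lam n = Max (range (lam n))"

definition Mset :: "real^'p^'p \<Rightarrow> ('p::finite \<Rightarrow> real) \<Rightarrow> ('p \<Rightarrow> ereal) \<Rightarrow> (real^'p) set" where
  "Mset C \<mu> \<psi> = {m. \<forall>j. (\<psi> j = \<infinity> \<longrightarrow> (C *v m) $ j = 0)
                      \<and> (\<psi> j < \<infinity> \<longrightarrow> m $ j * (C *v m) $ j \<le> \<mu> j)}"

definition minus_scaled :: "real^'p \<Rightarrow> real \<Rightarrow> (real^'p) set \<Rightarrow> (real^'p) set" where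
  "minus_scaled b c S = {b - c *\<^sub>R s | s. s \<in> S}"

end

theory Submission
  imports Defs
begin

definition qf :: "real^'p^'p \<Rightarrow> real^'p \<Rightarrow> real^'p \<Rightarrow> real" where
  "qf H a b = (b - a) \<bullet> (H *v (b - a))"
definition pen :: "real^'p \<Rightarrow> real^'p::finite \<Rightarrow> real" where
  "pen \<mu> b = 2 * (\<Sum>j\<in>UNIV. \<bar>\<mu>$j\<bar> * \<bar>b$j\<bar>)"
definition gob :: "real^'p^'p \<Rightarrow> real^'p \<Rightarrow> real^'p \<Rightarrow> real^'p::finite \<Rightarrow> real" where
  "gob H a \<mu> b = qf H a b + pen \<mu> b"
definition Phi :: "real^'p^'p \<Rightarrow> real^'p \<Rightarrow> real^'p \<Rightarrow> real^'p::finite" where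
  "Phi H a \<mu> = (THE b. \<forall>b'. gob H a \<mu> b \<le> gob H a \<mu> b')"

definition symm :: "real^'p^'p::finite \<Rightarrow> bool" where
  "symm H \<longleftrightarrow> (\<forall>x y. x \<bullet> (H *v y) = y \<bullet> (H *v x))"

lemma pen_convex:
  assumes "0 \<le> t" "t \<le> 1"
  shows "pen \<mu> ((1 - t) *\<^sub>R b + t *\<^sub>R b') \<le> (1 - t) * pen \<mu> b + t * pen \<mu> b'"
proof -
  have "\<bar>\<mu>$j\<bar> * \<bar>((1 - t) *\<^sub>R b + t *\<^sub>R b')$j\<bar> \<le> (1-t) * (\<bar>\<mu>$j\<bar> * \<bar>b$j\<bar>) + t * (\<bar>\<mu>$j\<bar> * \<bar>b'$j\<bar>)" for j
  proof -
    have "\<bar>((1 - t) *\<^sub>R b + t *\<^sub>R b')$j\<bar> \<le> (1-t) * \<bar>b$j\<bar> + t * \<bar>b'$j\<bar>"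
      using assms by (simp add: abs_triangle_ineq[THEN order_trans] abs_mult)
    then have "\<bar>\<mu>$j\<bar> * \<bar>((1 - t) *\<^sub>R b + t *\<^sub>R b')$j\<bar> \<le> \<bar>\<mu>$j\<bar> * ((1-t) * \<bar>b$j\<bar> + t * \<bar>b'$j\<bar>)"
      by (simp add: mult_left_mono)
    then show ?thesis by (simp add: algebra_simps)
  qed
  then have "(\<Sum>j\<in>UNIV. \<bar>\<mu>$j\<bar> * \<bar>((1 - t) *\<^sub>R b + t *\<^sub>R b')$j\<bar>) \<le>
     (\<Sum>j\<in>UNIV. (1-t) * (\<bar>\<mu>$j\<bar> * \<bar>b$j\<bar>) + t * (\<bar>\<mu>$j\<bar> * \<bar>b'$j\<bar>))"
    by (rule sum_mono)
  also have "\<dots> = (1-t) * (\<Sum>j\<in>UNIV. \<bar>\<mu>$j\<bar> * \<bar>b$j\<bar>) + t * (\<Sum>j\<in>UNIV. \<bar>\<mu>$j\<bar> * \<bar>b'$j\<bar>)"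
    by (simp add: sum.distrib sum_distrib_left)
  finally show ?thesis unfolding pen_def by linarith
qed

lemma qf_expand:
  assumes "symm H"
  shows "qf H a x = x \<bullet> (H *v x) - 2 * (x \<bullet> (H *v a)) + a \<bullet> (H *v a)"
  using assms unfolding qf_def symm_def
  by (simp add: matrix_vector_mult_diff_distrib inner_diff_left inner_diff_right)

lemma var_ineq:
  assumes S: "symm H" and min: "\<forall>b'. gob H a \<mu> b \<le> gob H a \<mu> b'"
  shows "0 \<le> 2 * ((b' - b) \<bullet> (H *v (b - a))) + pen \<mu> b' - pen \<mu> b"
proof (rule ccontr)
  define h where "h = b' - b"
  define S where "S = 2 * (h \<bullet> (H *v (b - a))) + pen \<mu> b' - pen \<mu> b"
  define q where "q = h \<bullet> (H *v h)"
  assume "\<not> ?thesis"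
  then have Sneg: "S < 0" unfolding S_def h_def by simp
  have key: "0 \<le> t * S + t^2 * q" if t: "0 \<le> t" "t \<le> 1" for t
  proof -
    have eq: "b + t *\<^sub>R h = (1 - t) *\<^sub>R b + t *\<^sub>R b'" unfolding h_def by (simp add: algebra_simps)
    have qq: "qf H a (b + t *\<^sub>R h) = qf H a b + 2 * t * (h \<bullet> (H *v (b - a))) + t^2 * q"
      using S unfolding qf_def q_def symm_def
      by (simp add: algebra_simps matrix_vector_mult_diff_distrib inner_diff_left inner_diff_right
            inner_add_left inner_add_right power2_eq_square)
    have "gob H a \<mu> b \<le> gob H a \<mu> (b + t *\<^sub>R h)" using min by blast
    also have "\<dots> = qf H a (b + t *\<^sub>R h) + pen \<mu> ((1 - t) *\<^sub>R b + t *\<^sub>R b')"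
      unfolding gob_def eq by simp
    also have "\<dots> \<le> qf H a b + 2 * t * (h \<bullet> (H *v (b - a))) + t^2 * q + ((1 - t) * pen \<mu> b + t * pen \<mu> b')"
      unfolding qq using pen_convex[OF t, of \<mu> b b'] by simp
    finally show ?thesis unfolding gob_def S_def by (simp add: algebra_simps)
  qed
  define t where "t = min 1 (- S / (2 * (\<bar>q\<bar> + 1)))"
  have tpos: "0 < t" using Sneg unfolding t_def by (simp add: field_simps)
  have t1: "t \<le> 1" unfolding t_def by simp
  have tq: "t * \<bar>q\<bar> \<le> - S / 2"
  proof -
    have tle: "t \<le> (- S) / (2 * (\<bar>q\<bar> + 1))" unfolding t_def by (simp only: min.cobounded2)
    have d: "2 * (\<bar>q\<bar> + 1) > 0" by simp
    have "t * (2 * (\<bar>q\<bar> + 1)) \<le> ((- S) / (2 * (\<bar>q\<bar> + 1))) * (2 * (\<bar>q\<bar> + 1))"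
      by (rule mult_right_mono[OF tle]) (use d in simp)
    also have "\<dots> = - S" using d by simp
    finally have "t * (2 * (\<bar>q\<bar> + 1)) \<le> - S" .
    moreover have "t * (2 * (\<bar>q\<bar> + 1)) = 2 * (t * \<bar>q\<bar>) + 2 * t" by (simp add: algebra_simps)
    ultimately show ?thesis using tpos by linarith
  qed
  have "0 \<le> t * (S + t * q)" using key[OF less_imp_le[OF tpos] t1] by (simp add: algebra_simps power2_eq_square)
  then have "0 \<le> S + t * q" using tpos by (simp add: zero_le_mult_iff)
  moreover have "t * q \<le> t * \<bar>q\<bar>" using tpos by (simp add: mult_left_mono)
  ultimately show False using tq Sneg by linarith
qed

lemma strong_conv:
  assumes S: "symm H" and min: "\<forall>b'. gob H a \<mu> b \<le> gob H a \<mu> b'"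
  shows "gob H a \<mu> b + qf H b b' \<le> gob H a \<mu> b'"
proof -
  have v: "0 \<le> 2 * ((b' - b) \<bullet> (H *v (b - a))) + pen \<mu> b' - pen \<mu> b" by (rule var_ineq[OF S min])
  have "gob H a \<mu> b' - gob H a \<mu> b - qf H b b' = 2 * ((b' - b) \<bullet> (H *v (b - a))) + pen \<mu> b' - pen \<mu> b"
    using S unfolding gob_def qf_def symm_def
    by (simp add: algebra_simps matrix_vector_mult_diff_distrib inner_diff_left inner_diff_right)
  with v show ?thesis by linarith
qed

definition pdk :: "real^'p^'p::finite \<Rightarrow> real \<Rightarrow> bool" where
  "pdk H \<kappa> \<longleftrightarrow> \<kappa> > 0 \<and> (\<forall>x. \<kappa> * (norm x)^2 \<le> x \<bullet> (H *v x))"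

lemma pen_nonneg: "0 \<le> pen \<mu> b"
  unfolding pen_def by (auto intro: sum_nonneg)

lemma qf_lower: "pdk H \<kappa> \<Longrightarrow> \<kappa> * (norm (b - a))^2 \<le> qf H a b"
  unfolding pdk_def qf_def by blast

lemma gob_cont: "continuous_on S (gob H a \<mu>)"
proof -
  have c1: "continuous_on S (\<lambda>b. H *v (b - a))"
    by (rule bounded_linear.continuous_on[OF matrix_vector_mul_bounded_linear]) (intro continuous_intros)
  show ?thesis unfolding gob_def qf_def pen_def
    by (intro continuous_intros c1)
qed

lemma exists_min:
  assumes pd: "pdk H \<kappa>"
  shows "\<exists>b. \<forall>b'. gob H a \<mu> b \<le> gob H a \<mu> b'"
proof -
  have k: "\<kappa> > 0" using pd unfolding pdk_def by simp
  define R where "R = sqrt (gob H a \<mu> a / \<kappa>) + 1"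
  have g0: "gob H a \<mu> a \<ge> 0" unfolding gob_def qf_def using pen_nonneg by simp
  have R0: "R > 0" unfolding R_def using g0 k by (simp add: add_nonneg_pos)
  obtain x where x: "x \<in> cball a R" "\<forall>y\<in>cball a R. gob H a \<mu> x \<le> gob H a \<mu> y"
    using continuous_attains_inf[OF compact_cball, of a R "gob H a \<mu>"] gob_cont[of "cball a R" H a \<mu>] R0 by auto
  have "gob H a \<mu> x \<le> gob H a \<mu> y" for y
  proof (cases "y \<in> cball a R")
    case True then show ?thesis using x by blast
  next
    case False
    then have d: "norm (y - a) > R" by (simp add: dist_norm norm_minus_commute)
    have "gob H a \<mu> a / \<kappa> < R^2"
    proof -
      have "sqrt (gob H a \<mu> a / \<kappa>) < R" unfolding R_def by simp
      then have "(sqrt (gob H a \<mu> a / \<kappa>))^2 < R^2"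
        using g0 k by (intro power_strict_mono) (auto)
      then show ?thesis using g0 k by simp
    qed
    then have "gob H a \<mu> a < \<kappa> * R^2" using k by (simp add: divide_less_eq mult.commute)
    also have "\<kappa> * R^2 \<le> \<kappa> * (norm (y - a))^2"
      using d R0 k by (intro mult_left_mono power_mono) auto
    also have "\<dots> \<le> gob H a \<mu> y" using qf_lower[OF pd, of y a] pen_nonneg[of \<mu> y] unfolding gob_def by simp
    finally have "gob H a \<mu> a < gob H a \<mu> y" .
    moreover have "gob H a \<mu> x \<le> gob H a \<mu> a" using x R0 by simp
    ultimately show ?thesis by simp
  qed
  then show ?thesis by blast
qed

lemma unique_min:
  assumes S: "symm H" and pd: "pdk H \<kappa>"
    and m1: "\<forall>b'. gob H a \<mu> b1 \<le> gob H a \<mu> b'" and m2: "\<forall>b'. gob H a \<mu> b2 \<le> gob H a \<mu> b'"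
  shows "b1 = b2"
proof -
  have "gob H a \<mu> b1 + qf H b1 b2 \<le> gob H a \<mu> b2" by (rule strong_conv[OF S m1])
  moreover have "gob H a \<mu> b2 \<le> gob H a \<mu> b1" using m2 by blast
  ultimately have "qf H b1 b2 \<le> 0" by simp
  moreover have "\<kappa> * (norm (b2 - b1))^2 \<le> qf H b1 b2" by (rule qf_lower[OF pd])
  moreover have "\<kappa> > 0" using pd unfolding pdk_def by simp
  ultimately have "(norm (b2 - b1))^2 \<le> 0"
    by (smt (verit) mult_pos_pos zero_less_power2 norm_ge_zero)
  then show ?thesis by simp
qed

lemma Phi_min:
  assumes S: "symm H" and pd: "pdk H \<kappa>"
  shows "\<forall>b'. gob H a \<mu> (Phi H a \<mu>) \<le> gob H a \<mu> b'"
proof -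
  obtain b where b: "\<forall>b'. gob H a \<mu> b \<le> gob H a \<mu> b'" using exists_min[OF pd] by blast
  have "\<exists>!b. \<forall>b'. gob H a \<mu> b \<le> gob H a \<mu> b'"
    using b unique_min[OF S pd] by blast
  then show ?thesis unfolding Phi_def by (rule theI')
qed

lemma Phi_eqI:
  assumes S: "symm H" and pd: "pdk H \<kappa>" and m: "\<forall>b'. gob H a \<mu> b \<le> gob H a \<mu> b'"
  shows "Phi H a \<mu> = b"
  using unique_min[OF S pd Phi_min[OF S pd] m] .

lemma Phi_lip:
  assumes S: "symm H" and pd: "pdk H \<kappa>"
  shows "\<kappa> * norm (Phi H a' \<mu>' - Phi H a \<mu>) \<le> norm (H *v (a - a')) + (\<Sum>j\<in>UNIV. \<bar>\<mu>$j - \<mu>'$j\<bar>)"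
proof -
  define b where "b = Phi H a \<mu>"
  define b' where "b' = Phi H a' \<mu>'"
  define D where "D = b' - b"
  have m1: "\<forall>c. gob H a \<mu> b \<le> gob H a \<mu> c" unfolding b_def by (rule Phi_min[OF S pd])
  have m2: "\<forall>c. gob H a' \<mu>' b' \<le> gob H a' \<mu>' c" unfolding b'_def by (rule Phi_min[OF S pd])
  have i1: "gob H a \<mu> b + qf H b b' \<le> gob H a \<mu> b'" by (rule strong_conv[OF S m1])
  have i2: "gob H a' \<mu>' b' + qf H b' b \<le> gob H a' \<mu>' b" by (rule strong_conv[OF S m2])
  have qq: "qf H b b' = D \<bullet> (H *v D)" "qf H b' b = D \<bullet> (H *v D)"
    unfolding qf_def D_def by (simp_all add: algebra_simps matrix_vector_mult_diff_distrib)
  have quad: "qf H a b' - qf H a b - qf H a' b' + qf H a' b = - 2 * (D \<bullet> (H *v (a - a')))"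
    using S unfolding qf_expand[OF S] D_def symm_def
    by (simp add: algebra_simps matrix_vector_mult_diff_distrib inner_diff_left inner_diff_right)
  have pendiff: "pen \<mu> b' - pen \<mu> b - pen \<mu>' b' + pen \<mu>' b \<le> 2 * ((\<Sum>j\<in>UNIV. \<bar>\<mu>$j - \<mu>'$j\<bar>) * norm D)"
  proof -
    have "pen \<mu> b' - pen \<mu> b - pen \<mu>' b' + pen \<mu>' b = 2 * (\<Sum>j\<in>UNIV. (\<bar>\<mu>$j\<bar> - \<bar>\<mu>'$j\<bar>) * (\<bar>b'$j\<bar> - \<bar>b$j\<bar>))"
      unfolding pen_def by (simp add: algebra_simps sum_subtractf sum.distrib)
    also have "\<dots> \<le> 2 * (\<Sum>j\<in>UNIV. \<bar>\<mu>$j - \<mu>'$j\<bar> * norm D)"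
    proof -
      have "(\<bar>\<mu>$j\<bar> - \<bar>\<mu>'$j\<bar>) * (\<bar>b'$j\<bar> - \<bar>b$j\<bar>) \<le> \<bar>\<mu>$j - \<mu>'$j\<bar> * norm D" for j
      proof -
        have "(\<bar>\<mu>$j\<bar> - \<bar>\<mu>'$j\<bar>) * (\<bar>b'$j\<bar> - \<bar>b$j\<bar>) \<le> \<bar>(\<bar>\<mu>$j\<bar> - \<bar>\<mu>'$j\<bar>) * (\<bar>b'$j\<bar> - \<bar>b$j\<bar>)\<bar>" by simp
        also have "\<dots> = \<bar>\<bar>\<mu>$j\<bar> - \<bar>\<mu>'$j\<bar>\<bar> * \<bar>\<bar>b'$j\<bar> - \<bar>b$j\<bar>\<bar>" by (simp add: abs_mult)
        also have "\<dots> \<le> \<bar>\<mu>$j - \<mu>'$j\<bar> * \<bar>D$j\<bar>"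
          unfolding D_def by (intro mult_mono) (auto simp: abs_triangle_ineq3)
        also have "\<dots> \<le> \<bar>\<mu>$j - \<mu>'$j\<bar> * norm D" by (intro mult_left_mono component_le_norm_cart) auto
        finally show ?thesis .
      qed
      then show ?thesis by (intro mult_left_mono sum_mono) auto
    qed
    finally show ?thesis by (simp add: sum_distrib_right)
  qed
  have "2 * (D \<bullet> (H *v D)) \<le> 2 * (norm D * norm (H *v (a - a'))) + 2 * ((\<Sum>j\<in>UNIV. \<bar>\<mu>$j - \<mu>'$j\<bar>) * norm D)"
  proof -
    have "- (D \<bullet> (H *v (a - a'))) \<le> norm D * norm (H *v (a - a'))"
      using Cauchy_Schwarz_ineq2[of D "H *v (a - a')"] by (simp add: abs_le_iff) 
    with i1 i2 qq quad pendiff show ?thesis unfolding gob_def by linarith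
  qed
  then have A: "D \<bullet> (H *v D) \<le> norm D * (norm (H *v (a - a')) + (\<Sum>j\<in>UNIV. \<bar>\<mu>$j - \<mu>'$j\<bar>))"
    by (simp add: algebra_simps)
  have B: "\<kappa> * (norm D)^2 \<le> D \<bullet> (H *v D)" using pd unfolding pdk_def by blast
  have k: "\<kappa> > 0" using pd unfolding pdk_def by simp
  show ?thesis
  proof (cases "norm D = 0")
    case True then show ?thesis unfolding D_def b_def b'_def
      by (simp add: sum_nonneg)
  next
    case False
    then have nD: "norm D > 0" by simp
    from A B have "norm D * (\<kappa> * norm D) \<le> norm D * (norm (H *v (a - a')) + (\<Sum>j\<in>UNIV. \<bar>\<mu>$j - \<mu>'$j\<bar>))"
      by (simp add: power2_eq_square algebra_simps)
    then have "\<kappa> * norm D \<le> norm (H *v (a - a')) + (\<Sum>j\<in>UNIV. \<bar>\<mu>$j - \<mu>'$j\<bar>)"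
      using nD by (simp add: mult_le_cancel_left_pos)
    then show ?thesis unfolding D_def b_def b'_def .
  qed
qed

lemma Phi_cont:
  assumes S: "symm H" and pd: "pdk H \<kappa>"
  shows "continuous_on UNIV (\<lambda>x. Phi H (fst x) (snd x))"
proof -
  have k: "\<kappa> > 0" using pd unfolding pdk_def by simp
  obtain K where K: "K > 0" "\<And>x. norm (H *v x) \<le> norm x * K"
    using bounded_linear.pos_bounded[OF matrix_vector_mul_bounded_linear[of H]] by blast
  define L where "L = (K + real CARD('a)) / \<kappa>"
  have L: "L > 0" unfolding L_def using K k by simp
  have bound: "norm (Phi H (fst x') (snd x') - Phi H (fst x) (snd x)) \<le> L * dist x' x" for x x' :: "(real^'a) \<times> (real^'a)"
  proof -
    obtain a \<mu> where x: "x = (a, \<mu>)" by (cases x)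
    obtain a' \<mu>' where x': "x' = (a', \<mu>')" by (cases x')
    have da: "norm (a - a') \<le> dist x' x" using x x' 
      by (simp add: dist_norm norm_Pair norm_minus_commute real_sqrt_sum_squares_ge1)
    have dm: "norm (\<mu> - \<mu>') \<le> dist x' x" using x x' 
      by (simp add: dist_norm norm_Pair norm_minus_commute real_sqrt_sum_squares_ge2)
    have "(\<Sum>j\<in>UNIV. \<bar>\<mu>$j - \<mu>'$j\<bar>) \<le> (\<Sum>j\<in>(UNIV::'a set). dist x' x)"
      by (intro sum_mono) (metis component_le_norm_cart vector_minus_component dm order_trans)
    then have s: "(\<Sum>j\<in>UNIV. \<bar>\<mu>$j - \<mu>'$j\<bar>) \<le> real CARD('a) * dist x' x" by simp
    have h: "norm (H *v (a - a')) \<le> K * dist x' x"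
      using K(2)[of "a - a'"] da K(1) by (smt (verit) mult.commute mult_left_mono)
    have "\<kappa> * norm (Phi H a' \<mu>' - Phi H a \<mu>) \<le> (K + real CARD('a)) * dist x' x"
      using Phi_lip[OF S pd, of a' \<mu>' a \<mu>] h s by (simp add: algebra_simps)
    then show ?thesis unfolding x x' L_def using k by (simp add: field_simps)
  qed
  show ?thesis
  proof (rule continuous_onI)
    fix x :: "(real^'a) \<times> (real^'a)" and e :: real assume "x \<in> UNIV" "e > 0"
    show "\<exists>d>0. \<forall>x'\<in>UNIV. dist x' x < d \<longrightarrow> dist (Phi H (fst x') (snd x')) (Phi H (fst x) (snd x)) \<le> e"
    proof (intro exI[of _ "e / L"] conjI ballI impI)
      show "e / L > 0" using \<open>e>0\<close> L by simp
      fix x' assume "dist x' x < e / L"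
      then have "L * dist x' x \<le> e" using L by (simp add: field_simps)
      then show "dist (Phi H (fst x') (snd x')) (Phi H (fst x) (snd x)) \<le> e"
        using bound[of x' x] by (simp add: dist_norm)
    qed
  qed
qed

lemma matrix_inv_props:
  fixes A :: "real^'n^'n"
  assumes "invertible A"
  shows "A ** matrix_inv A = mat 1" "matrix_inv A ** A = mat 1"
proof -
  have "\<exists>A'. A ** A' = mat 1 \<and> A' ** A = mat 1" using assms unfolding invertible_def by blast
  then have "A ** matrix_inv A = mat 1 \<and> matrix_inv A ** A = mat 1"
    unfolding matrix_inv_def by (rule someI_ex)
  then show "A ** matrix_inv A = mat 1" "matrix_inv A ** A = mat 1" by auto
qed

lemma pdk_invertible:
  fixes H :: "real^'n^'n"
  assumes "pdk H \<kappa>" shows "invertible H"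
proof -
  have "\<forall>x. H *v x = 0 \<longrightarrow> x = 0"
  proof (intro allI impI)
    fix x assume "H *v x = 0"
    then have "\<kappa> * (norm x)^2 \<le> 0" using assms unfolding pdk_def by (metis inner_zero_right)
    moreover have "\<kappa> > 0" using assms unfolding pdk_def by simp
    ultimately have "(norm x)^2 \<le> 0" using mult_le_cancel_left_pos[of \<kappa> "(norm x)^2" 0] by simp
    then show "x = 0" by simp
  qed
  then have "\<exists>B. B ** H = mat 1" using matrix_left_invertible_ker by blast
  then show ?thesis using invertible_left_inverse by blast
qed

lemma inv_cancel:
  fixes H :: "real^'n^'n"
  assumes "invertible H"
  shows "H *v (matrix_inv H *v v) = v" "matrix_inv H *v (H *v v) = v"
  using matrix_inv_props[OF assms] by (simp_all add: matrix_vector_mul_assoc)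

lemma XtX_bilin:
  "x \<bullet> (XtX X n *v y) = (\<Sum>i<n. X_mult X n x i * X_mult X n y i)"
proof -
  have "x \<bullet> (XtX X n *v y) = (\<Sum>j\<in>UNIV. x$j * (\<Sum>k\<in>UNIV. (\<Sum>i<n. X n i j * X n i k) * y$k))"
    by (simp add: inner_vec_def XtX_def matrix_vector_mult_def)
  also have "\<dots> = (\<Sum>j\<in>UNIV. \<Sum>k\<in>UNIV. \<Sum>i<n. (X n i j * x$j) * (X n i k * y$k))"
    by (simp add: sum_distrib_left sum_distrib_right mult_ac)
  also have "\<dots> = (\<Sum>i<n. \<Sum>j\<in>UNIV. \<Sum>k\<in>UNIV. (X n i j * x$j) * (X n i k * y$k))"
  proof -
    have "(\<Sum>j\<in>UNIV. \<Sum>k\<in>UNIV. \<Sum>i<n. (X n i j * x$j) * (X n i k * y$k))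
        = (\<Sum>j\<in>UNIV. \<Sum>i<n. \<Sum>k\<in>UNIV. (X n i j * x$j) * (X n i k * y$k))"
      by (rule sum.cong[OF refl], rule sum.swap)
    also have "\<dots> = (\<Sum>i<n. \<Sum>j\<in>UNIV. \<Sum>k\<in>UNIV. (X n i j * x$j) * (X n i k * y$k))"
      by (rule sum.swap)
    finally show ?thesis .
  qed
  also have "\<dots> = (\<Sum>i<n. X_mult X n x i * X_mult X n y i)"
    by (simp add: X_mult_def sum_product mult_ac)
  finally show ?thesis .
qed

lemma Xt_bilin:
  "x \<bullet> Xt_mult X n y = (\<Sum>i<n. X_mult X n x i * y i)"
proof -
  have "x \<bullet> Xt_mult X n y = (\<Sum>j\<in>UNIV. \<Sum>i<n. (X n i j * x$j) * y i)"
    by (simp add: inner_vec_def Xt_mult_def sum_distrib_left mult_ac)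
  also have "\<dots> = (\<Sum>i<n. \<Sum>j\<in>UNIV. (X n i j * x$j) * y i)" by (rule sum.swap)
  also have "\<dots> = (\<Sum>i<n. X_mult X n x i * y i)"
    by (simp add: X_mult_def sum_distrib_right sum_distrib_left mult_ac)
  finally show ?thesis .
qed

lemma XtX_symm: "symm (XtX X n)"
  unfolding symm_def XtX_bilin by (simp add: mult.commute)

lemma X_mult_diff: "X_mult X n (b - a) i = X_mult X n b i - X_mult X n a i"
  by (simp add: X_mult_def algebra_simps sum_subtractf)

lemma Xt_response: "Xt_mult X n (response X n \<beta> eps) = XtX X n *v \<beta> + Xt_mult X n eps"
proof -
  have "x \<bullet> Xt_mult X n (response X n \<beta> eps) = x \<bullet> (XtX X n *v \<beta> + Xt_mult X n eps)" for x
    by (simp add: Xt_bilin XtX_bilin inner_add_right response_def algebra_simps sum.distrib)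
  then show ?thesis by (metis vector_eq_ldot)
qed

lemma LS_response:
  assumes "invertible (XtX X n)"
  shows "beta_LS X n (response X n \<beta> eps) = \<beta> + matrix_inv (XtX X n) *v Xt_mult X n eps"
  unfolding beta_LS_def Xt_response by (simp add: matrix_vector_right_distrib inv_cancel[OF assms])

lemma RSS_decomp:
  fixes y :: "nat \<Rightarrow> real"
  assumes inv: "invertible (XtX X n)"
  shows "(\<Sum>i<n. (y i - X_mult X n b i)\<^sup>2) = (\<Sum>i<n. (y i - X_mult X n (beta_LS X n y) i)\<^sup>2) + qf (XtX X n) (beta_LS X n y) b"
proof -
  define a where "a = beta_LS X n y"
  define h where "h = b - a"
  have Ha: "XtX X n *v a = Xt_mult X n y" unfolding a_def beta_LS_def by (rule inv_cancel(1)[OF inv])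
  have cross: "(\<Sum>i<n. (y i - X_mult X n a i) * X_mult X n h i) = 0"
  proof -
    have "(\<Sum>i<n. (y i - X_mult X n a i) * X_mult X n h i) = h \<bullet> Xt_mult X n y - h \<bullet> (XtX X n *v a)"
      by (simp add: Xt_bilin XtX_bilin algebra_simps sum_subtractf)
    then show ?thesis using Ha by simp
  qed
  have sq: "(\<Sum>i<n. (X_mult X n h i)^2) = qf (XtX X n) a b"
    unfolding qf_def h_def[symmetric] XtX_bilin by (simp add: power2_eq_square)
  have "(\<Sum>i<n. (y i - X_mult X n b i)\<^sup>2) = (\<Sum>i<n. (y i - X_mult X n a i)\<^sup>2 - 2 * ((y i - X_mult X n a i) * X_mult X n h i) + (X_mult X n h i)^2)"
    by (rule sum.cong) (auto simp: h_def X_mult_diff power2_eq_square algebra_simps)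
  also have "\<dots> = (\<Sum>i<n. (y i - X_mult X n a i)\<^sup>2) - 2 * (\<Sum>i<n. (y i - X_mult X n a i) * X_mult X n h i) + (\<Sum>i<n. (X_mult X n h i)^2)"
    by (simp add: sum.distrib sum_subtractf sum_distrib_left)
  finally show ?thesis using cross sq unfolding a_def by simp
qed

lemma AL_eq_Phi:
  assumes pd: "pdk (XtX X n) \<kappa>" and lam: "\<And>j. lam n j \<ge> 0"
  shows "beta_AL X lam n y = Phi (XtX X n) (beta_LS X n y) (\<chi> j. lam n j / \<bar>beta_LS X n y $ j\<bar>)"
proof -
  define a where "a = beta_LS X n y"
  define \<mu> where "\<mu> = (\<chi> j. lam n j / \<bar>a $ j\<bar>)"
  define R where "R = (\<Sum>i<n. (y i - X_mult X n a i)\<^sup>2)"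
  have inv: "invertible (XtX X n)" by (rule pdk_invertible[OF pd])
  have obj: "AL_objective X lam n y b = R + gob (XtX X n) a \<mu> b" for b
  proof -
    have t: "\<bar>\<mu>$j\<bar> * \<bar>b$j\<bar> = lam n j * \<bar>b $ j\<bar> / \<bar>a $ j\<bar>" for j
    proof -
      have "\<bar>\<mu>$j\<bar> = lam n j / \<bar>a $ j\<bar>" unfolding \<mu>_def using lam[of j] by simp
      then show ?thesis by simp
    qed
    have "pen \<mu> b = 2 * (\<Sum>j\<in>UNIV. lam n j * \<bar>b $ j\<bar> / \<bar>a $ j\<bar>)"
      unfolding pen_def using t by simp
    moreover have "(\<Sum>i<n. (y i - X_mult X n b i)\<^sup>2) = R + qf (XtX X n) a b"
      unfolding R_def a_def by (rule RSS_decomp[OF inv])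
    ultimately show ?thesis unfolding AL_objective_def gob_def a_def[symmetric] by simp
  qed
  have P: "(\<lambda>b. \<forall>b'. AL_objective X lam n y b \<le> AL_objective X lam n y b')
         = (\<lambda>b. \<forall>b'. gob (XtX X n) a \<mu> b \<le> gob (XtX X n) a \<mu> b')"
    unfolding obj by simp
  have "beta_AL X lam n y = Phi (XtX X n) a \<mu>"
    unfolding beta_AL_def Phi_def P ..
  then show ?thesis unfolding a_def \<mu>_def .
qed

lemma Phi_bounds:
  fixes l :: "'p::finite \<Rightarrow> real"
  assumes S: "symm H" and pd: "pdk H \<kappa>" and lpos: "\<And>j. l j > 0"
    and b: "b = Phi H a (\<chi> j. l j / \<bar>a$j\<bar>)"
  shows "qf H a b \<le> 2 * (\<Sum>j\<in>UNIV. l j)"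
    and "\<And>j. (b$j - a$j) * ((H *v (b - a))$j) \<le> l j"
proof -
  define \<mu> where "\<mu> = (\<chi> j. l j / \<bar>a$j\<bar>)"
  have min: "\<forall>b'. gob H a \<mu> b \<le> gob H a \<mu> b'" unfolding b \<mu>_def by (rule Phi_min[OF S pd])
  have mu_a: "\<bar>\<mu>$j\<bar> * \<bar>a$j\<bar> \<le> l j" for j
  proof (cases "a$j = 0")
    case True then show ?thesis using lpos[of j] by simp
  next
    case False
    have "\<bar>\<mu>$j\<bar> = l j / \<bar>a$j\<bar>" unfolding \<mu>_def using lpos[of j] by simp
    then show ?thesis using False by simp
  qed
  have "gob H a \<mu> b \<le> gob H a \<mu> a" using min by blast
  also have "\<dots> = pen \<mu> a" unfolding gob_def qf_def by simp
  also have "\<dots> \<le> 2 * (\<Sum>j\<in>UNIV. l j)" unfolding pen_def using mu_a by (simp add: sum_mono)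
  finally show "qf H a b \<le> 2 * (\<Sum>j\<in>UNIV. l j)" unfolding gob_def using pen_nonneg[of \<mu> b] by simp
  fix j
  define b' where "b' = (\<chi> k. if k = j then a$j else b$k)"
  have v: "0 \<le> 2 * ((b' - b) \<bullet> (H *v (b - a))) + pen \<mu> b' - pen \<mu> b" by (rule var_ineq[OF S min])
  have d: "b' - b = (\<chi> k. if k = j then a$j - b$j else 0)" unfolding b'_def by (simp add: vec_eq_iff)
  have i: "(b' - b) \<bullet> (H *v (b - a)) = (a$j - b$j) * ((H *v (b - a))$j)"
  proof -
    have "(b' - b) \<bullet> (H *v (b - a)) = (\<Sum>k\<in>UNIV. if k = j then (a$j - b$j) * ((H *v (b - a))$k) else 0)"
      unfolding d inner_vec_def by (rule sum.cong) auto
    then show ?thesis by simp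
  qed
  have p: "pen \<mu> b' - pen \<mu> b = 2 * (\<bar>\<mu>$j\<bar> * \<bar>a$j\<bar> - \<bar>\<mu>$j\<bar> * \<bar>b$j\<bar>)"
  proof -
    have "pen \<mu> b' - pen \<mu> b = 2 * (\<Sum>k\<in>UNIV. \<bar>\<mu>$k\<bar> * \<bar>b'$k\<bar> - \<bar>\<mu>$k\<bar> * \<bar>b$k\<bar>)"
      unfolding pen_def by (simp add: sum_subtractf algebra_simps)
    also have "(\<Sum>k\<in>UNIV. \<bar>\<mu>$k\<bar> * \<bar>b'$k\<bar> - \<bar>\<mu>$k\<bar> * \<bar>b$k\<bar>) = (\<Sum>k\<in>UNIV. if k = j then \<bar>\<mu>$j\<bar> * \<bar>a$j\<bar> - \<bar>\<mu>$j\<bar> * \<bar>b$j\<bar> else 0)"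
      by (rule sum.cong) (auto simp: b'_def)
    finally show ?thesis by simp
  qed
  have "(b$j - a$j) * ((H *v (b - a))$j) \<le> \<bar>\<mu>$j\<bar> * \<bar>a$j\<bar> - \<bar>\<mu>$j\<bar> * \<bar>b$j\<bar>"
    using v i p by (simp add: algebra_simps)
  also have "\<dots> \<le> l j"
  proof -
    have "0 \<le> \<bar>\<mu>$j\<bar> * \<bar>b$j\<bar>" by simp
    then show ?thesis using mu_a[of j] by linarith
  qed
  finally show "(b$j - a$j) * ((H *v (b - a))$j) \<le> l j" .
qed

lemma mv_norm_bound:
  fixes A :: "real^'n::finite^'m::finite"
  shows "norm (A *v x) \<le> real CARD('m) * norm A * norm x"
proof -
  have "norm (A *v x) \<le> (\<Sum>i\<in>UNIV. \<bar>(A *v x) $ i\<bar>)" by (rule norm_le_l1_cart)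
  also have "\<dots> \<le> (\<Sum>i::'m\<in>UNIV. norm A * norm x)"
  proof (rule sum_mono)
    fix i
    have "\<bar>(A *v x) $ i\<bar> \<le> norm (A $ i) * norm x"
      by (simp add: matrix_mult_dot Cauchy_Schwarz_ineq2)
    also have "\<dots> \<le> norm A * norm x" by (metis mult_right_mono norm_ge_zero Finite_Cartesian_Product.norm_nth_le)
    finally show "\<bar>(A *v x) $ i\<bar> \<le> norm A * norm x" .
  qed
  finally show ?thesis by simp
qed

lemma measurable_vecI:
  fixes f :: "'w \<Rightarrow> real^'n::finite"
  assumes "\<And>j. (\<lambda>w. f w $ j) \<in> borel_measurable M"
  shows "f \<in> borel_measurable M"
proof (subst borel_measurable_euclidean_space, intro ballI)
  fix i :: "real^'n" assume "i \<in> Basis"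
  then obtain j where "i = axis j 1" unfolding Basis_vec_def by auto
  then show "(\<lambda>x. f x \<bullet> i) \<in> borel_measurable M" using assms[of j] by (simp add: inner_axis)
qed

lemma cdf_distr_eq:
  assumes Zm: "Z \<in> borel_measurable M"
  shows "cdf (distr M borel Z) x = measure M {w\<in>space M. Z w \<le> x}"
proof -
  have "cdf (distr M borel Z) x = measure (distr M borel Z) {..x}" by (simp add: cdf_def)
  also have "\<dots> = measure M (Z -` {..x} \<inter> space M)" by (rule measure_distr[OF Zm]) auto
  also have "Z -` {..x} \<inter> space M = {w\<in>space M. Z w \<le> x}" by auto
  finally show ?thesis .
qed

lemma tight_from_weak:
  fixes Z :: "nat \<Rightarrow> 'w \<Rightarrow> real"
  assumes P: "prob_space M" and Zm: "\<And>n. Z n \<in> borel_measurable M"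
    and wc: "weak_conv_m (\<lambda>n. distr M borel (Z n)) N" and RD: "real_distribution N"
    and sing: "\<And>x. measure N {x} = 0" and eta: "\<eta> > 0"
  shows "\<exists>K>0. eventually (\<lambda>n. measure M {w\<in>space M. K < \<bar>Z n w\<bar>} \<le> \<eta>) sequentially"
proof -
  interpret N: real_distribution N by (rule RD)
  interpret M: prob_space M by (rule P)
  have "eventually (\<lambda>x. 1 - \<eta>/4 < cdf N x) at_top"
    using N.cdf_lim_at_top_prob eta by (intro order_tendstoD(1)) auto
  then obtain K0 where K0: "\<And>x. x \<ge> K0 \<Longrightarrow> 1 - \<eta>/4 < cdf N x" by (auto simp: eventually_at_top_linorder)
  have "eventually (\<lambda>x. cdf N x < \<eta>/4) at_bot"
    using N.cdf_lim_at_bot eta by (intro order_tendstoD(2)) auto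
  then obtain K1 where K1: "\<And>x. x \<le> K1 \<Longrightarrow> cdf N x < \<eta>/4" by (auto simp: eventually_at_bot_linorder)
  define K where "K = max 1 (max K0 (- K1))"
  have Kpos: "K > 0" unfolding K_def by simp
  have c1: "1 - \<eta>/4 < cdf N K" using K0 unfolding K_def by simp
  have c2: "cdf N (-K) < \<eta>/4" using K1 unfolding K_def by simp
  have cont: "isCont (cdf N) x" for x using N.isCont_cdf sing by simp
  have t1: "(\<lambda>n. cdf (distr M borel (Z n)) K) \<longlonglongrightarrow> cdf N K"
    using wc cont unfolding weak_conv_m_def weak_conv_def by blast
  have t2: "(\<lambda>n. cdf (distr M borel (Z n)) (-K)) \<longlonglongrightarrow> cdf N (-K)"
    using wc cont unfolding weak_conv_m_def weak_conv_def by blast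
  have e1: "eventually (\<lambda>n. 1 - \<eta>/2 < cdf (distr M borel (Z n)) K) sequentially"
    using t1 c1 eta by (intro order_tendstoD(1)) auto
  have e2: "eventually (\<lambda>n. cdf (distr M borel (Z n)) (-K) < \<eta>/2) sequentially"
    using t2 c2 eta by (intro order_tendstoD(2)) auto
  have "eventually (\<lambda>n. measure M {w\<in>space M. K < \<bar>Z n w\<bar>} \<le> \<eta>) sequentially"
    using e1 e2
  proof eventually_elim
    case (elim n)
    have m[measurable]: "Z n \<in> borel_measurable M" by (rule Zm)
    have A1: "{w\<in>space M. Z n w \<le> K} \<in> sets M" by measurable
    have A2: "{w\<in>space M. Z n w \<le> -K} \<in> sets M" by measurable
    have "{w\<in>space M. K < \<bar>Z n w\<bar>} \<subseteq> (space M - {w\<in>space M. Z n w \<le> K}) \<union> {w\<in>space M. Z n w \<le> -K}"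
      by auto
    then have "measure M {w\<in>space M. K < \<bar>Z n w\<bar>} \<le> measure M ((space M - {w\<in>space M. Z n w \<le> K}) \<union> {w\<in>space M. Z n w \<le> -K})"
      using A1 A2 by (intro M.finite_measure_mono) auto
    also have "\<dots> \<le> measure M (space M - {w\<in>space M. Z n w \<le> K}) + measure M {w\<in>space M. Z n w \<le> -K}"
      using A1 A2 by (intro measure_Un_le) auto
    also have "measure M (space M - {w\<in>space M. Z n w \<le> K}) = 1 - measure M {w\<in>space M. Z n w \<le> K}"
      using A1 by (rule M.prob_compl)
    finally show ?case using elim cdf_distr_eq[OF Zm] by simp
  qed
  then show ?thesis using Kpos by blast
qed

lemma normal_real_distribution:
  assumes "s > 0"
  shows "real_distribution (density lborel (normal_density m s))"
    and "\<And>x. measure (density lborel (normal_density m s)) {x} = 0"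
proof -
  show "real_distribution (density lborel (normal_density m s))"
    unfolding real_distribution_def real_distribution_axioms_def
    using prob_space_normal_density[OF assms] by simp
  fix x
  have "emeasure (density lborel (normal_density m s)) {x} = (\<integral>\<^sup>+ y. ennreal (normal_density m s y) * indicator {x} y \<partial>lborel)"
    by (rule emeasure_density) auto
  also have "\<dots> = 0" by (rule nn_integral_null_set) auto
  finally show "measure (density lborel (normal_density m s)) {x} = 0" by (simp add: measure_def)
qed

definition Eb :: "real \<Rightarrow> real \<Rightarrow> real \<Rightarrow> real \<Rightarrow> real \<Rightarrow> real" where
  "Eb p B r \<Delta> nC = (B + r) * (p * \<Delta> * B + p * nC * r) + r * p * (nC + \<Delta>) * B"

lemma perturb:
  fixes G C :: "real^'p::finite^'p" and v \<epsilon> :: "real^'p"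
  assumes vB: "norm v \<le> B" and er: "norm \<epsilon> \<le> r"
  shows "(v + \<epsilon>)$j * (C *v (v + \<epsilon>))$j \<le> v$j * (G *v v)$j + Eb (real CARD('p)) B r (norm (G - C)) (norm C)"
proof -
  define p where "p = real CARD('p)"
  define m where "m = v + \<epsilon>"
  define \<Delta> where "\<Delta> = norm (G - C)"
  have p0: "p \<ge> 0" unfolding p_def by simp
  have B0: "B \<ge> 0" using vB norm_ge_zero order_trans by blast
  have D0: "\<Delta> \<ge> 0" unfolding \<Delta>_def by simp
  have r0: "r \<ge> 0" using er norm_ge_zero order_trans by blast
  have eq: "m$j * (C *v m)$j - v$j * (G *v v)$j = m$j * ((C *v m) - (G *v v))$j + \<epsilon>$j * (G *v v)$j"
    unfolding m_def by (simp add: algebra_simps)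
  have mB: "\<bar>m$j\<bar> \<le> B + r"
    using component_le_norm_cart[of m j] norm_triangle_ineq[of v \<epsilon>] vB er unfolding m_def by linarith
  have d1: "norm ((C - G) *v v) \<le> p * \<Delta> * B"
  proof -
    have "norm ((C - G) *v v) \<le> p * norm (C - G) * norm v" unfolding p_def by (rule mv_norm_bound)
    also have "\<dots> \<le> p * \<Delta> * B" unfolding \<Delta>_def using vB p0
      by (simp add: norm_minus_commute mult_left_mono mult_nonneg_nonneg)
    finally show ?thesis .
  qed
  have d2: "norm (C *v \<epsilon>) \<le> p * norm C * r"
  proof -
    have "norm (C *v \<epsilon>) \<le> p * norm C * norm \<epsilon>" unfolding p_def by (rule mv_norm_bound)
    also have "\<dots> \<le> p * norm C * r" using er p0 by (simp add: mult_left_mono mult_nonneg_nonneg)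
    finally show ?thesis .
  qed
  have cm: "\<bar>((C *v m) - (G *v v))$j\<bar> \<le> p * \<Delta> * B + p * norm C * r"
  proof -
    have "(C *v m) - (G *v v) = (C - G) *v v + C *v \<epsilon>" unfolding m_def by (simp add: algebra_simps)
    then have "\<bar>((C *v m) - (G *v v))$j\<bar> \<le> norm ((C - G) *v v + C *v \<epsilon>)"
      by (metis component_le_norm_cart)
    also have "\<dots> \<le> norm ((C - G) *v v) + norm (C *v \<epsilon>)" by (rule norm_triangle_ineq)
    finally show ?thesis using d1 d2 by linarith
  qed
  have gv: "\<bar>(G *v v)$j\<bar> \<le> p * (norm C + \<Delta>) * B"
  proof -
    have "\<bar>(G *v v)$j\<bar> \<le> norm (G *v v)" by (rule component_le_norm_cart)
    also have "\<dots> \<le> p * norm G * norm v" unfolding p_def by (rule mv_norm_bound)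
    also have "\<dots> \<le> p * (norm C + \<Delta>) * B"
    proof -
      have "norm G \<le> norm C + \<Delta>" unfolding \<Delta>_def using norm_triangle_ineq[of C "G - C"] by simp
      then show ?thesis using vB p0 D0 by (intro mult_mono) auto
    qed
    finally show ?thesis .
  qed
  have ej: "\<bar>\<epsilon>$j\<bar> \<le> r" using component_le_norm_cart[of \<epsilon> j] er by linarith
  have "m$j * ((C *v m) - (G *v v))$j \<le> (B + r) * (p * \<Delta> * B + p * norm C * r)"
  proof -
    have "m$j * ((C *v m) - (G *v v))$j \<le> \<bar>m$j\<bar> * \<bar>((C *v m) - (G *v v))$j\<bar>" by (simp add: abs_mult[symmetric])
    also have "\<dots> \<le> (B + r) * (p * \<Delta> * B + p * norm C * r)" using mB cm by (intro mult_mono) auto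
    finally show ?thesis .
  qed
  moreover have "\<epsilon>$j * (G *v v)$j \<le> r * (p * (norm C + \<Delta>) * B)"
  proof -
    have "\<epsilon>$j * (G *v v)$j \<le> \<bar>\<epsilon>$j\<bar> * \<bar>(G *v v)$j\<bar>" by (simp add: abs_mult[symmetric])
    also have "\<dots> \<le> r * (p * (norm C + \<Delta>) * B)" using ej gv r0 by (intro mult_mono) auto
    finally show ?thesis .
  qed
  ultimately show ?thesis using eq unfolding Eb_def m_def[symmetric] p_def[symmetric] \<Delta>_def[symmetric]
    by (simp add: algebra_simps)
qed

lemma C_coercive:
  fixes C :: "real^'p::finite^'p"
  assumes C_pd: "\<And>m. m \<noteq> 0 \<Longrightarrow> m \<bullet> (C *v m) > 0"
  shows "\<exists>\<kappa>>0. \<forall>x. \<kappa> * (norm x)^2 \<le> x \<bullet> (C *v x)"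
proof -
  have cont: "continuous_on (sphere 0 1) (\<lambda>x::real^'p. x \<bullet> (C *v x))"
    by (intro continuous_intros matrix_vector_mult_linear_continuous_on continuous_on_id
        bounded_linear.continuous_on[OF matrix_vector_mul_bounded_linear])
  obtain j :: 'p where True by blast
  have ne: "sphere (0::real^'p) 1 \<noteq> {}" using norm_axis_1[of j] by (auto simp: sphere_def intro!: exI[of _ "axis j 1"])
  obtain x0 where x0: "x0 \<in> sphere 0 1" "\<forall>y\<in>sphere 0 1. x0 \<bullet> (C *v x0) \<le> y \<bullet> (C *v y)"
    using continuous_attains_inf[OF compact_sphere ne cont] by blast
  define \<kappa> where "\<kappa> = x0 \<bullet> (C *v x0)"
  have "x0 \<noteq> 0" using x0(1) by (cases "x0 = 0") auto
  then have kpos: "\<kappa> > 0" unfolding \<kappa>_def using C_pd[of x0] by auto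
  have "\<kappa> * (norm x)^2 \<le> x \<bullet> (C *v x)" for x
  proof (cases "x = 0")
    case True then show ?thesis by simp
  next
    case False
    define u where "u = (1 / norm x) *\<^sub>R x"
    have u1: "u \<in> sphere 0 1" unfolding u_def using False by simp
    have xu: "x = norm x *\<^sub>R u" unfolding u_def using False by simp
    have "x \<bullet> (C *v x) = (norm x)^2 * (u \<bullet> (C *v u))"
      by (subst (1 2) xu) (simp add: matrix_vector_mult_scaleR power2_eq_square)
    moreover have "\<kappa> \<le> u \<bullet> (C *v u)" using x0(2) u1 unfolding \<kappa>_def by blast
    ultimately show ?thesis by (metis mult.commute mult_right_mono zero_le_power2)
  qed
  then show ?thesis using kpos by blast
qed

lemma H_pd:
  fixes C :: "real^'p::finite^'p"
  assumes kC: "\<forall>x. \<kappa> * (norm x)^2 \<le> x \<bullet> (C *v x)" and kpos: "\<kappa> > 0"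
    and n: "n > 0" and small: "real CARD('p) * norm ((1 / real n) *\<^sub>R XtX X n - C) \<le> \<kappa> / 2"
  shows "pdk (XtX X n) (real n * \<kappa> / 2)"
proof -
  define G where "G = (1 / real n) *\<^sub>R XtX X n"
  have HG: "XtX X n = real n *\<^sub>R G" unfolding G_def using n by simp
  have "\<kappa> / 2 * (norm x)^2 \<le> x \<bullet> (G *v x)" for x
  proof -
    have "\<bar>x \<bullet> ((G - C) *v x)\<bar> \<le> norm x * norm ((G - C) *v x)" by (rule Cauchy_Schwarz_ineq2)
    also have "\<dots> \<le> norm x * (real CARD('p) * norm (G - C) * norm x)"
      by (intro mult_left_mono mv_norm_bound) auto
    also have "\<dots> = (real CARD('p) * norm (G - C)) * (norm x)^2" by (simp add: power2_eq_square)
    also have "\<dots> \<le> \<kappa> / 2 * (norm x)^2" using small unfolding G_def by (intro mult_right_mono) auto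
    finally have "\<bar>x \<bullet> ((G - C) *v x)\<bar> \<le> \<kappa> / 2 * (norm x)^2" .
    moreover have "x \<bullet> (G *v x) = x \<bullet> (C *v x) + x \<bullet> ((G - C) *v x)"
      by (simp add: algebra_simps inner_diff_right)
    ultimately show ?thesis using kC[rule_format, of x] by linarith
  qed
  then have "real n * \<kappa> / 2 * (norm x)^2 \<le> x \<bullet> (XtX X n *v x)" for x
  proof -
    have "real n * (\<kappa> / 2 * (norm x)^2) \<le> real n * (x \<bullet> (G *v x))"
      by (rule mult_left_mono) (use \<open>\<kappa> / 2 * (norm x)^2 \<le> x \<bullet> (G *v x)\<close> in auto)
    moreover have "x \<bullet> (XtX X n *v x) = real n * (x \<bullet> (G *v x))"
      unfolding HG by (simp add: scaleR_matrix_vector_assoc[symmetric])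
    ultimately show ?thesis by simp
  qed
  then show ?thesis unfolding pdk_def using n kpos by simp
qed

lemma det_step:
  fixes H G C :: "real^'p::finite^'p" and \<beta> \<delta> :: "real^'p" and l l0 :: "'p \<Rightarrow> real"
  assumes S: "symm H" and pd: "pdk H (real n * \<kappa> / 2)" and n: "n > 0" and kpos: "\<kappa> > 0"
    and HG: "H = real n *\<^sub>R G"
    and lpos: "\<And>j. l j > 0" and lmax: "\<And>j. l j \<le> ls"
    and c: "c = sqrt (ls / real n)"
    and er: "norm ((1/c) *\<^sub>R \<delta>) \<le> r"
    and cond: "\<And>j. l j / ls + Eb (real CARD('p)) (sqrt (4 * real CARD('p) / \<kappa>)) r (norm (G - C)) (norm C) \<le> d * l0 j"
  shows "\<forall>j. ((1/c) *\<^sub>R (Phi H (\<beta> + \<delta>) (\<chi> j. l j / \<bar>(\<beta> + \<delta>)$j\<bar>) - \<beta>))$j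
          * (C *v ((1/c) *\<^sub>R (Phi H (\<beta> + \<delta>) (\<chi> j. l j / \<bar>(\<beta> + \<delta>)$j\<bar>) - \<beta>)))$j \<le> d * l0 j"
proof
  fix j
  define p where "p = real CARD('p)"
  define a where "a = \<beta> + \<delta>"
  define b where "b = Phi H a (\<chi> j. l j / \<bar>a$j\<bar>)"
  define v where "v = (1/c) *\<^sub>R (b - a)"
  define \<epsilon> where "\<epsilon> = (1/c) *\<^sub>R \<delta>"
  obtain j0 :: 'p where True by blast
  have ls: "ls > 0" using lpos[of j0] lmax[of j0] by linarith
  have c0: "c > 0" unfolding c using ls n by simp
  have c2: "c^2 = ls / real n" unfolding c using ls n by simp
  have bd: "qf H a b \<le> 2 * (\<Sum>j\<in>UNIV. l j)" and bj: "\<And>j. (b$j - a$j) * ((H *v (b - a))$j) \<le> l j"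
    using Phi_bounds[OF S pd lpos b_def] by auto
  have "(\<Sum>j\<in>UNIV. l j) \<le> (\<Sum>j\<in>(UNIV::'p set). ls)" by (rule sum_mono) (rule lmax)
  then have sl: "(\<Sum>j\<in>UNIV. l j) \<le> p * ls" unfolding p_def by simp
  have "real n * \<kappa> / 2 * (norm (b - a))^2 \<le> qf H a b" by (rule qf_lower[OF pd])
  then have nb: "(norm (b - a))^2 \<le> 4 * p * ls / (real n * \<kappa>)"
    using bd sl n kpos by (simp add: field_simps)
  have nv: "norm v = norm (b - a) / c" unfolding v_def using c0 by simp
  have "(norm v)^2 = (norm (b - a))^2 / c^2" unfolding nv by (simp add: power_divide)
  also have "\<dots> \<le> (4 * p * ls / (real n * \<kappa>)) / (ls / real n)" unfolding c2
    using nb ls n by (intro divide_right_mono) auto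
  also have "\<dots> = 4 * p / \<kappa>" using ls n kpos by (simp add: field_simps)
  finally have vB: "norm v \<le> sqrt (4 * p / \<kappa>)" by (intro real_le_rsqrt)
  have vG: "v$j * (G *v v)$j \<le> l j / ls"
  proof -
    have G: "G = (1 / real n) *\<^sub>R H" unfolding HG using n by simp
    have "v$j * (G *v v)$j = (1 / (c^2 * real n)) * ((b$j - a$j) * ((H *v (b - a))$j))"
      unfolding v_def G by (simp add: scaleR_matrix_vector_assoc[symmetric] matrix_vector_mult_scaleR power2_eq_square)
    also have "\<dots> \<le> (1 / (c^2 * real n)) * l j" using bj[of j] c0 n by (intro mult_left_mono) auto
    also have "\<dots> = l j / ls" unfolding c2 using n by simp
    finally show ?thesis .
  qed
  have m: "(1/c) *\<^sub>R (b - \<beta>) = v + \<epsilon>" unfolding v_def \<epsilon>_def a_def by (simp add: algebra_simps)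
  have "(v + \<epsilon>)$j * (C *v (v + \<epsilon>))$j \<le> v$j * (G *v v)$j + Eb p (sqrt (4 * p / \<kappa>)) r (norm (G - C)) (norm C)"
    unfolding p_def by (rule perturb[OF vB[unfolded p_def]]) (use er \<epsilon>_def in simp)
  also have "\<dots> \<le> d * l0 j" using vG cond[of j] unfolding p_def by linarith
  finally show "((1/c) *\<^sub>R (Phi H (\<beta> + \<delta>) (\<chi> j. l j / \<bar>(\<beta> + \<delta>)$j\<bar>) - \<beta>))$j
          * (C *v ((1/c) *\<^sub>R (Phi H (\<beta> + \<delta>) (\<chi> j. l j / \<bar>(\<beta> + \<delta>)$j\<bar>) - \<beta>)))$j \<le> d * l0 j"
    using m unfolding b_def a_def by simp
qed

lemma Mset_eq: "Mset C \<mu> (\<lambda>j. ereal (\<psi> j)) = {m. \<forall>j. m$j * (C *v m)$j \<le> \<mu> j}"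
  by (simp add: Mset_def)

lemma Mset_closed: "closed {m::real^'p::finite. \<forall>j. m$j * (C *v m)$j \<le> \<mu> j}"
proof -
  have "closed {m::real^'p. m$j * (C *v m)$j \<le> \<mu> j}" for j
  proof -
    have c: "continuous_on UNIV (\<lambda>m::real^'p. m$j * (C *v m)$j)"
      by (intro continuous_intros continuous_on_component
           bounded_linear.continuous_on[OF matrix_vector_mul_bounded_linear] continuous_on_id)
    show ?thesis using closed_Collect_le[OF c continuous_on_const, of "\<mu> j"] by simp
  qed
  then show ?thesis by (simp add: Collect_all_eq closed_INT)
qed

lemma minus_scaled_iff:
  assumes "c > 0"
  shows "\<beta> \<in> minus_scaled b c S \<longleftrightarrow> (1/c) *\<^sub>R (b - \<beta>) \<in> S"
proof
  assume "\<beta> \<in> minus_scaled b c S"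
  then obtain s where s: "s \<in> S" "\<beta> = b - c *\<^sub>R s" unfolding minus_scaled_def by auto
  have "(1/c) *\<^sub>R (b - \<beta>) = s" using s(2) assms by simp
  then show "(1/c) *\<^sub>R (b - \<beta>) \<in> S" using s(1) by simp
next
  assume "(1/c) *\<^sub>R (b - \<beta>) \<in> S"
  moreover have "\<beta> = b - c *\<^sub>R ((1/c) *\<^sub>R (b - \<beta>))" using assms by simp
  ultimately show "\<beta> \<in> minus_scaled b c S" unfolding minus_scaled_def by blast
qed

lemma delta_meas:
  assumes e_rv: "\<And>i. e i \<in> borel_measurable M"
  shows "(\<lambda>w. A *v Xt_mult X n (\<lambda>i. e i w)) \<in> borel_measurable M"
proof -
  have f: "(\<lambda>w. Xt_mult X n (\<lambda>i. e i w)) \<in> borel_measurable M"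
  proof (rule measurable_vecI)
    fix j
    have [measurable]: "\<And>i. e i \<in> borel_measurable M" by (rule e_rv)
    show "(\<lambda>w. Xt_mult X n (\<lambda>i. e i w) $ j) \<in> borel_measurable M"
      unfolding Xt_mult_def by simp
  qed
  show ?thesis
    by (rule borel_measurable_continuous_on[OF matrix_vector_mult_linear_continuous_on f])
qed

lemma event_eq:
  assumes pd: "pdk (XtX X n) \<kappa>" and lam: "\<And>j. lam n j \<ge> 0" and c: "c > 0"
  shows "{w\<in>space M. \<beta> \<in> minus_scaled (beta_AL X lam n (response X n \<beta> (\<lambda>i. e i w))) c S}
    = {w\<in>space M. (1/c) *\<^sub>R (Phi (XtX X n) (\<beta> + matrix_inv (XtX X n) *v Xt_mult X n (\<lambda>i. e i w))
          (\<chi> j. lam n j / \<bar>(\<beta> + matrix_inv (XtX X n) *v Xt_mult X n (\<lambda>i. e i w))$j\<bar>) - \<beta>) \<in> S}"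
  by (simp only: AL_eq_Phi[where lam=lam and n=n and X=X, OF pd lam] LS_response[OF pdk_invertible[OF pd]] minus_scaled_iff[OF c])

lemma event_meas:
  assumes e_rv: "\<And>i. e i \<in> borel_measurable M" and S: "symm H" and pd: "pdk H \<kappa>" and cl: "closed T"
  shows "{w\<in>space M. (1/c) *\<^sub>R (Phi H (\<beta> + A *v Xt_mult X n (\<lambda>i. e i w))
          (\<chi> j. l j / \<bar>(\<beta> + A *v Xt_mult X n (\<lambda>i. e i w))$j\<bar>) - \<beta>) \<in> T} \<in> sets M"
proof -
  define a where "a = (\<lambda>w. \<beta> + A *v Xt_mult X n (\<lambda>i. e i w))"
  have am[measurable]: "a \<in> borel_measurable M" unfolding a_def using delta_meas[OF e_rv] by measurable
  have aj[measurable]: "(\<lambda>w. a w $ j) \<in> borel_measurable M" for j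
    by (rule measurable_compose[OF am borel_measurable_nth])
  have mm: "(\<lambda>w. \<chi> j. l j / \<bar>a w $ j\<bar>) \<in> borel_measurable M"
    by (rule measurable_vecI) (simp only: vec_lambda_beta, measurable)
  have pm: "(\<lambda>w. Phi H (a w) (\<chi> j. l j / \<bar>a w $ j\<bar>)) \<in> borel_measurable M"
    by (rule borel_measurable_continuous_Pair[OF am mm Phi_cont[OF S pd]])
  have gm: "(\<lambda>w. (1/c) *\<^sub>R (Phi H (a w) (\<chi> j. l j / \<bar>a w $ j\<bar>) - \<beta>)) \<in> borel_measurable M"
    using pm by measurable
  have "{w\<in>space M. (1/c) *\<^sub>R (Phi H (a w) (\<chi> j. l j / \<bar>a w $ j\<bar>) - \<beta>) \<in> T} \<in> sets M"
    using measurable_sets[OF gm borel_closed[OF cl]] by (simp add: vimage_def Int_def conj_commute)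
  then show ?thesis unfolding a_def .
qed

lemma lam_le_star:
  fixes lam :: "nat \<Rightarrow> 'p::finite \<Rightarrow> real"
  shows "lam n j \<le> lam_star lam n"
  unfolding lam_star_def by (rule Max_ge) auto

lemma per_n:
  fixes M :: "'w measure" and X :: "nat \<Rightarrow> nat \<Rightarrow> 'p::finite \<Rightarrow> real" and C :: "real^'p^'p"
    and lam :: "nat \<Rightarrow> 'p \<Rightarrow> real"
  assumes prob: "prob_space M"
    and e_rv: "\<And>i. e i \<in> borel_measurable M"
    and kC: "\<forall>x. \<kappa> * (norm x)^2 \<le> x \<bullet> (C *v x)" and kpos: "\<kappa> > 0"
    and n: "n > 0" and lpos: "\<And>j. lam n j > 0"
    and small: "real CARD('p) * norm ((1 / real n) *\<^sub>R XtX X n - C) \<le> \<kappa> / 2"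
    and K: "K \<ge> 0"
    and bad: "\<And>j. measure M {w\<in>space M. K < \<bar>sqrt (real n) * (matrix_inv (XtX X n) *v Xt_mult X n (\<lambda>i. e i w))$j\<bar>} \<le> \<eta>"
    and cond: "\<And>j. lam n j / lam_star lam n + Eb (real CARD('p)) (sqrt (4 * real CARD('p) / \<kappa>))
          (real CARD('p) * K / sqrt (lam_star lam n)) (norm ((1 / real n) *\<^sub>R XtX X n - C)) (norm C) \<le> d * l0 j"
  shows "1 - real CARD('p) * \<eta> \<le> measure M {w\<in>space M. \<beta> \<in> minus_scaled (beta_AL X lam n (response X n \<beta> (\<lambda>i. e i w)))
                     (sqrt (lam_star lam n / real n)) (Mset C (\<lambda>j. d * l0 j) (\<lambda>j. ereal (\<psi> j)))}"
proof -
  interpret M: prob_space M by (rule prob)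
  define p where "p = real CARD('p)"
  define H where "H = XtX X n"
  define G where "G = (1 / real n) *\<^sub>R XtX X n"
  define ls where "ls = lam_star lam n"
  define c where "c = sqrt (ls / real n)"
  define \<delta> where "\<delta> = (\<lambda>w. matrix_inv H *v Xt_mult X n (\<lambda>i. e i w))"
  define T where "T = {m::real^'p. \<forall>j. m$j * (C *v m)$j \<le> d * l0 j}"
  define r where "r = p * K / sqrt ls"
  obtain j0 :: 'p where True by blast
  have ls: "ls > 0" unfolding ls_def using lpos[of j0] lam_le_star[of lam n j0] by linarith
  have c0: "c > 0" unfolding c_def using ls n by simp
  have pd: "pdk H (real n * \<kappa> / 2)" unfolding H_def by (rule H_pd[OF kC kpos n small])
  have S: "symm H" unfolding H_def by (rule XtX_symm)
  have HG: "H = real n *\<^sub>R G" unfolding H_def G_def using n by simp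
  have dm[measurable]: "\<delta> \<in> borel_measurable M" unfolding \<delta>_def by (rule delta_meas[OF e_rv])
  have djm[measurable]: "(\<lambda>w. \<delta> w $ j) \<in> borel_measurable M" for j
    by (rule measurable_compose[OF dm borel_measurable_nth])
  define Gd where "Gd = {w\<in>space M. \<forall>j. \<bar>sqrt (real n) * \<delta> w $ j\<bar> \<le> K}"
  have Gdm: "Gd \<in> sets M" unfolding Gd_def by measurable
  have badm: "{w\<in>space M. K < \<bar>sqrt (real n) * \<delta> w $ j\<bar>} \<in> sets M" for j by measurable
  have "space M - Gd = (\<Union>j. {w\<in>space M. K < \<bar>sqrt (real n) * \<delta> w $ j\<bar>})"
    unfolding Gd_def by (auto simp: not_le) (meson not_le)
  then have "measure M (space M - Gd) \<le> (\<Sum>j\<in>UNIV. measure M {w\<in>space M. K < \<bar>sqrt (real n) * \<delta> w $ j\<bar>})"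
  proof -
    have rng: "(\<lambda>j. {w\<in>space M. K < \<bar>sqrt (real n) * \<delta> w $ j\<bar>}) ` UNIV \<subseteq> sets M" using badm by blast
    show ?thesis
      using M.finite_measure_subadditive_finite[OF finite rng] \<open>space M - Gd = _\<close> by simp
  qed
  also have "\<dots> \<le> (\<Sum>j\<in>(UNIV::'p set). \<eta>)" using bad unfolding \<delta>_def H_def by (intro sum_mono) auto
  also have "\<dots> = p * \<eta>" unfolding p_def by simp
  finally have "1 - measure M Gd \<le> p * \<eta>" using M.prob_compl[OF Gdm] by simp
  then have mGd: "1 - p * \<eta> \<le> measure M Gd" by simp
  define E where "E = {w\<in>space M. \<beta> \<in> minus_scaled (beta_AL X lam n (response X n \<beta> (\<lambda>i. e i w))) c (Mset C (\<lambda>j. d * l0 j) (\<lambda>j. ereal (\<psi> j)))}"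
  have Eeq: "E = {w\<in>space M. (1/c) *\<^sub>R (Phi H (\<beta> + \<delta> w) (\<chi> j. lam n j / \<bar>(\<beta> + \<delta> w)$j\<bar>) - \<beta>) \<in> T}"
    unfolding E_def Mset_eq T_def[symmetric] \<delta>_def H_def
    by (rule event_eq[OF pd[unfolded H_def]]) (use lpos less_imp_le c0 in auto)
  have Em: "E \<in> sets M" unfolding Eeq \<delta>_def T_def
    by (rule event_meas[OF e_rv S pd Mset_closed])
  have sub: "Gd \<subseteq> E"
  proof
    fix w assume w: "w \<in> Gd"
    have comp: "\<bar>\<delta> w $ j\<bar> \<le> K / sqrt (real n)" for j
    proof -
      have "\<bar>sqrt (real n) * \<delta> w $ j\<bar> \<le> K" using w unfolding Gd_def by auto
      then have "sqrt (real n) * \<bar>\<delta> w $ j\<bar> \<le> K" by (simp add: abs_mult)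
      then show ?thesis using n by (simp add: field_simps)
    qed
    have "norm (\<delta> w) \<le> (\<Sum>j\<in>UNIV. \<bar>\<delta> w $ j\<bar>)" by (rule norm_le_l1_cart)
    also have "\<dots> \<le> (\<Sum>j\<in>(UNIV::'p set). K / sqrt (real n))" by (intro sum_mono comp)
    also have "\<dots> = p * K / sqrt (real n)" unfolding p_def by simp
    finally have nd: "norm (\<delta> w) \<le> p * K / sqrt (real n)" .
    have er: "norm ((1/c) *\<^sub>R \<delta> w) \<le> r"
    proof -
      have "norm ((1/c) *\<^sub>R \<delta> w) = norm (\<delta> w) / c" using c0 by simp
      also have "\<dots> \<le> (p * K / sqrt (real n)) / c" using nd c0 by (intro divide_right_mono) auto
      also have "\<dots> = r" unfolding r_def c_def using n ls
        by (simp add: real_sqrt_divide field_simps)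
      finally show ?thesis .
    qed
    have "\<forall>j. ((1/c) *\<^sub>R (Phi H (\<beta> + \<delta> w) (\<chi> j. lam n j / \<bar>(\<beta> + \<delta> w)$j\<bar>) - \<beta>))$j
          * (C *v ((1/c) *\<^sub>R (Phi H (\<beta> + \<delta> w) (\<chi> j. lam n j / \<bar>(\<beta> + \<delta> w)$j\<bar>) - \<beta>)))$j \<le> d * l0 j"
      by (rule det_step[OF S pd n kpos HG lpos lam_le_star c_def[unfolded ls_def] er])
         (use cond in \<open>simp add: G_def r_def ls_def p_def\<close>)
    then show "w \<in> E" unfolding Eeq T_def using w unfolding Gd_def by auto
  qed
  have "measure M Gd \<le> measure M E" by (rule M.finite_measure_mono[OF sub Em])
  then show ?thesis using mGd unfolding E_def c_def ls_def p_def by simp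
qed

theorem mainTheorem13:
  fixes M :: "'w measure"
    and e :: "nat \<Rightarrow> 'w \<Rightarrow> real"
    and \<sigma> :: real
    and X :: "nat \<Rightarrow> nat \<Rightarrow> 'p::finite \<Rightarrow> real"
    and C :: "real^'p^'p"
    and lam :: "nat \<Rightarrow> 'p \<Rightarrow> real"
    and lam0 :: "'p \<Rightarrow> real"
    and \<psi> :: "'p \<Rightarrow> real"
    and d :: real
  assumes prob: "prob_space M"
    and e_rv: "\<And>i. e i \<in> borel_measurable M"
    and e_indep: "prob_space.indep_vars M (\<lambda>_. borel) e UNIV"
    and e_ident: "\<And>i. distr M borel (e i) = distr M borel (e 0)"
    and e_sq_int: "integrable M (\<lambda>w. (e 0 w)\<^sup>2)"
    and e_mean: "prob_space.expectation M (e 0) = 0"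
    and e_var: "prob_space.variance M (e 0) = \<sigma>\<^sup>2"
    and \<sigma>_pos: "\<sigma> > 0"
    and full_rank: "\<And>n b. n \<ge> CARD('p) \<Longrightarrow> (\<forall>i<n. X_mult X n b i = 0) \<Longrightarrow> b = 0"
    and XtX_lim: "(\<lambda>n. (1 / real n) *\<^sub>R XtX X n) \<longlonglongrightarrow> C"
    and C_pd: "\<And>m. m \<noteq> 0 \<Longrightarrow> m \<bullet> (C *v m) > 0"
    and LS_clt: "\<And>t. t \<noteq> 0 \<Longrightarrow>
        weak_conv_m
          (\<lambda>n. distr M borel
                 (\<lambda>w. t \<bullet> (sqrt (real n) *\<^sub>R (matrix_inv (XtX X n) *v Xt_mult X n (\<lambda>i. e i w)))))
          (density lborel (normal_density 0 (sqrt (\<sigma>\<^sup>2 * (t \<bullet> (matrix_inv C *v t))))))"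
    and LS_nonzero: "\<And>n \<beta> j. n \<ge> CARD('p) \<Longrightarrow>
        measure M {w \<in> space M. beta_LS X n (response X n \<beta> (\<lambda>i. e i w)) $ j = 0} = 0"
    and lam_pos: "\<And>n j. n \<ge> CARD('p) \<Longrightarrow> lam n j > 0"
    and lam_star_n: "(\<lambda>n. lam_star lam n / real n) \<longlonglongrightarrow> 0"
    and lam_star_inf: "filterlim (lam_star lam) at_top sequentially"
    and lam0_lim: "\<And>j. (\<lambda>n. lam n j / lam_star lam n) \<longlonglongrightarrow> lam0 j"
    and psi_lim: "\<And>j. (\<lambda>n. sqrt (lam_star lam n) / lam n j) \<longlonglongrightarrow> \<psi> j"
    and lam0_range: "\<And>j. 0 < lam0 j \<and> lam0 j \<le> 1"
    and psi_nonneg: "\<And>j. \<psi> j \<ge> 0"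
    and d_gt: "d > 1"
  shows "(\<lambda>n. INF \<beta>::real^'p.
            measure M {w \<in> space M.
              \<beta> \<in> minus_scaled (beta_AL X lam n (response X n \<beta> (\<lambda>i. e i w)))
                     (sqrt (lam_star lam n / real n))
                     (Mset C (\<lambda>j. d * lam0 j) (\<lambda>j. ereal (\<psi> j)))})
         \<longlonglongrightarrow> 1"
proof -
  interpret M: prob_space M by (rule prob)
  define p where "p = real CARD('p)"
  have p0: "p > 0" unfolding p_def by simp
  obtain \<kappa> where kpos: "\<kappa> > 0" and kC: "\<forall>x. \<kappa> * (norm x)^2 \<le> x \<bullet> (C *v x)"
    using C_coercive[OF C_pd] by blast
  have invC: "invertible C" by (rule pdk_invertible[of C \<kappa>]) (use kpos kC in \<open>simp add: pdk_def\<close>)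
  define \<delta> where "\<delta> = (\<lambda>n w. matrix_inv (XtX X n) *v Xt_mult X n (\<lambda>i. e i w))"
  define Z where "Z = (\<lambda>(j::'p) n w. axis j 1 \<bullet> (sqrt (real n) *\<^sub>R (matrix_inv (XtX X n) *v Xt_mult X n (\<lambda>i. e i w))))"
  have Zeq: "Z j n w = sqrt (real n) * \<delta> n w $ j" for j n w
    unfolding Z_def \<delta>_def by (simp add: inner_axis')
  have dm: "\<delta> n \<in> borel_measurable M" for n unfolding \<delta>_def by (rule delta_meas[OF e_rv])
  have djm: "(\<lambda>w. \<delta> n w $ j) \<in> borel_measurable M" for n j
    by (rule measurable_compose[OF dm borel_measurable_nth])
  have Zm: "Z j n \<in> borel_measurable M" for j n
    unfolding Zeq[abs_def] using djm[of n j] by measurable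
  define f where "f = (\<lambda>n (\<beta>::real^'p). measure M {w \<in> space M.
              \<beta> \<in> minus_scaled (beta_AL X lam n (response X n \<beta> (\<lambda>i. e i w)))
                     (sqrt (lam_star lam n / real n))
                     (Mset C (\<lambda>j. d * lam0 j) (\<lambda>j. ereal (\<psi> j)))})"
  have tight: "\<exists>K>0. eventually (\<lambda>n. measure M {w\<in>space M. K < \<bar>Z j n w\<bar>} \<le> \<eta>) sequentially"
    if eta: "\<eta> > 0" for j \<eta>
  proof -
    define t :: "real^'p" where "t = axis j 1"
    have t0: "t \<noteq> 0" unfolding t_def by simp
    define q where "q = matrix_inv C *v t"
    have Cq: "C *v q = t" unfolding q_def by (rule inv_cancel(1)[OF invC])
    have q0: "q \<noteq> 0" using Cq t0 by auto
    have "t \<bullet> q > 0" using C_pd[OF q0] Cq by (simp add: inner_commute)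
    then have s0: "sqrt (\<sigma>\<^sup>2 * (t \<bullet> (matrix_inv C *v t))) > 0" using \<sigma>_pos unfolding q_def by simp
    have wc: "weak_conv_m (\<lambda>n. distr M borel (Z j n))
        (density lborel (normal_density 0 (sqrt (\<sigma>\<^sup>2 * (t \<bullet> (matrix_inv C *v t))))))"
      using LS_clt[OF t0] unfolding Z_def t_def by simp
    show ?thesis
      by (rule tight_from_weak[OF prob Zm wc normal_real_distribution[OF s0] eta])
  qed
  have claim: "eventually (\<lambda>n. \<forall>\<beta>. 1 - \<epsilon> \<le> f n \<beta>) sequentially" if eps: "\<epsilon> > 0" for \<epsilon>
  proof -
    define \<eta> where "\<eta> = \<epsilon> / p"
    have eta: "\<eta> > 0" unfolding \<eta>_def using eps p0 by simp
    have "\<forall>j. \<exists>K. K > 0 \<and> eventually (\<lambda>n. measure M {w\<in>space M. K < \<bar>Z j n w\<bar>} \<le> \<eta>) sequentially"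
      using tight[OF eta] by blast
    then have "\<exists>Kf. \<forall>j. Kf j > 0 \<and> eventually (\<lambda>n. measure M {w\<in>space M. Kf j < \<bar>Z j n w\<bar>} \<le> \<eta>) sequentially"
      by (rule choice)
    then obtain Kf where Kf0: "\<forall>j. Kf j > 0 \<and> eventually (\<lambda>n. measure M {w\<in>space M. Kf j < \<bar>Z j n w\<bar>} \<le> \<eta>) sequentially"
      by blast
    have Kf: "\<And>j. Kf j > 0"
      "\<And>j. eventually (\<lambda>n. measure M {w\<in>space M. Kf j < \<bar>Z j n w\<bar>} \<le> \<eta>) sequentially"
      using Kf0 by auto
    define K where "K = (\<Sum>j\<in>UNIV. Kf j)"
    have KK: "Kf j \<le> K" for j unfolding K_def
      by (rule member_le_sum) (use Kf(1) less_imp_le in auto)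
    have K0: "K \<ge> 0" using KK[of undefined] Kf(1)[of undefined] by linarith
    have ev_bad: "eventually (\<lambda>n. \<forall>j. measure M {w\<in>space M. K < \<bar>sqrt (real n) * \<delta> n w $ j\<bar>} \<le> \<eta>) sequentially"
    proof (rule eventually_all_finite)
      fix j
      show "eventually (\<lambda>n. measure M {w\<in>space M. K < \<bar>sqrt (real n) * \<delta> n w $ j\<bar>} \<le> \<eta>) sequentially"
        using Kf(2)[of j]
      proof eventually_elim
        case (elim n)
        have "measure M {w\<in>space M. K < \<bar>sqrt (real n) * \<delta> n w $ j\<bar>} \<le> measure M {w\<in>space M. Kf j < \<bar>Z j n w\<bar>}"
        proof (rule M.finite_measure_mono)
          show "{w\<in>space M. K < \<bar>sqrt (real n) * \<delta> n w $ j\<bar>} \<subseteq> {w\<in>space M. Kf j < \<bar>Z j n w\<bar>}"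
            using KK[of j] by (auto simp: Zeq)
          show "{w\<in>space M. Kf j < \<bar>Z j n w\<bar>} \<in> sets M" using Zm[of j n] by measurable
        qed
        then show ?case using elim by simp
      qed
    qed
    define B where "B = sqrt (4 * p / \<kappa>)"
    define r where "r = (\<lambda>n. p * K / sqrt (lam_star lam n))"
    define \<Delta> where "\<Delta> = (\<lambda>n. norm ((1 / real n) *\<^sub>R XtX X n - C))"
    have t_r: "r \<longlonglongrightarrow> 0" unfolding r_def
      by (rule tendsto_divide_0[OF tendsto_const])
         (rule filterlim_at_top_imp_at_infinity[OF filterlim_compose[OF sqrt_at_top lam_star_inf]])
    have t_D: "\<Delta> \<longlonglongrightarrow> 0"
    proof -
      have "(\<lambda>n. (1 / real n) *\<^sub>R XtX X n - C) \<longlonglongrightarrow> C - C" by (intro tendsto_diff XtX_lim tendsto_const)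
      then have "\<Delta> \<longlonglongrightarrow> norm (C - C)" unfolding \<Delta>_def by (rule tendsto_norm)
      then show ?thesis by simp
    qed
    have t_E: "(\<lambda>n. Eb p B (r n) (\<Delta> n) (norm C)) \<longlonglongrightarrow> 0"
    proof -
      have "(\<lambda>n. Eb p B (r n) (\<Delta> n) (norm C)) \<longlonglongrightarrow> Eb p B 0 0 (norm C)"
        unfolding Eb_def by (intro tendsto_intros t_r t_D)
      then show ?thesis by (simp add: Eb_def)
    qed
    have ev_cond: "eventually (\<lambda>n. \<forall>j. lam n j / lam_star lam n + Eb p B (r n) (\<Delta> n) (norm C) \<le> d * lam0 j) sequentially"
    proof (rule eventually_all_finite)
      fix j
      have "(\<lambda>n. lam n j / lam_star lam n + Eb p B (r n) (\<Delta> n) (norm C)) \<longlonglongrightarrow> lam0 j + 0"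
        by (intro tendsto_add lam0_lim t_E)
      moreover have "lam0 j + 0 < d * lam0 j" using lam0_range[of j] d_gt by simp
      ultimately have "eventually (\<lambda>n. lam n j / lam_star lam n + Eb p B (r n) (\<Delta> n) (norm C) < d * lam0 j) sequentially"
        by (rule order_tendstoD(2))
      then show "eventually (\<lambda>n. lam n j / lam_star lam n + Eb p B (r n) (\<Delta> n) (norm C) \<le> d * lam0 j) sequentially"
        by (rule eventually_mono) simp
    qed
    have ev_small: "eventually (\<lambda>n. p * \<Delta> n \<le> \<kappa> / 2) sequentially"
    proof -
      have "(\<lambda>n. p * \<Delta> n) \<longlonglongrightarrow> p * 0" by (intro tendsto_mult tendsto_const t_D)
      then have "eventually (\<lambda>n. p * \<Delta> n < \<kappa> / 2) sequentially" using kpos by (intro order_tendstoD(2)) auto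
      then show ?thesis by (rule eventually_mono) simp
    qed
    have ev_n: "eventually (\<lambda>n. n \<ge> max 1 CARD('p)) sequentially" by (rule eventually_ge_at_top)
    show ?thesis using ev_bad ev_cond ev_small ev_n
    proof eventually_elim
      case (elim n)
      have c0: "0 < CARD('p)" by simp
      have n: "n > 0" using elim(4) c0 by linarith
      have lpos: "\<And>j. lam n j > 0" using lam_pos elim(4) by simp
      show ?case
      proof
        fix \<beta>
        have "1 - real CARD('p) * \<eta> \<le> f n \<beta>" unfolding f_def
          by (rule per_n[where lam=lam and n=n and X=X and e=e and M=M and C=C, OF prob e_rv kC kpos n lpos _ K0])
             (use elim in \<open>simp_all add: \<delta>_def \<Delta>_def p_def B_def r_def\<close>)
        then show "1 - \<epsilon> \<le> f n \<beta>" unfolding \<eta>_def p_def using p0[unfolded p_def] by simp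
      qed
    qed
  qed
  have fle: "f n \<beta> \<le> 1" for n \<beta> unfolding f_def by (rule M.prob_le_1)
  have bdd: "bdd_below (range (f n))" for n unfolding f_def by (intro bdd_belowI[of _ 0]) auto
  have lim: "(\<lambda>n. INF \<beta>::real^'p. f n \<beta>) \<longlonglongrightarrow> 1"
  proof (rule tendstoI)
    fix \<epsilon> :: real assume eps: "\<epsilon> > 0"
    show "eventually (\<lambda>n. dist (INF \<beta>::real^'p. f n \<beta>) 1 < \<epsilon>) sequentially"
      using claim[of "\<epsilon>/2"] eps
    proof -
      have ev: "eventually (\<lambda>n. \<forall>\<beta>. 1 - \<epsilon>/2 \<le> f n \<beta>) sequentially" using claim[of "\<epsilon>/2"] eps by simp
      show ?thesis using ev
    proof eventually_elim
      case (elim n)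
      have lo: "1 - \<epsilon>/2 \<le> (INF \<beta>::real^'p. f n \<beta>)" by (rule cINF_greatest) (use elim in auto)
      have hi: "(INF \<beta>::real^'p. f n \<beta>) \<le> 1" using cINF_lower[OF bdd, of 0 n] fle[of n 0] by simp
      show ?case using lo hi eps by (simp add: dist_real_def abs_le_iff)
    qed
    qed
  qed
  then show ?thesis unfolding f_def .
qed

end
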